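(* Let $\Gamma=\{0=\rho_1<\rho_2<\cdots\}$ be an Arf numerical semigroup and $d_i=\rho_{i+1}-\rho_i$ for $i\ge1$. If $i\ge2$ and $d_i<d_{i-1}$, then \[ |\mathrm{Ap}(\Gamma,d_i)|=i-1+d_i. \]
   Context: A numerical semigroup is a subset of $\mathbb N$ containing $0$, closed under addition, with finite complement; its elements listed increasingly are $\rho_1<\rho_2<\cdots$. $\Gamma$ is Arf if $\rho_i+\rho_j-\rho_k\in\Gamma$ for all $i\ge j\ge k$. For $x\in\mathbb Z$, $\mathrm{Ap}(\Gamma,x)=\{s\in\Gamma: s-x\notin\Gamma\}$. *)

theory Defs
  imports Main "HOL-Library.Infinite_Set"
begin

definition numerical_semigroup :: "nat set \<Rightarrow> bool" where
  "numerical_semigroup S \<longleftrightarrow>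
     0 \<in> S \<and> (\<forall>a\<in>S. \<forall>b\<in>S. a + b \<in> S) \<and> finite (UNIV - S)"

text \<open>The elements listed increasingly, 1-indexed: rho S 1 = 0 < rho S 2 < ...\<close>
definition rho :: "nat set \<Rightarrow> nat \<Rightarrow> nat" where
  "rho S i = enumerate S (i - 1)"

definition arf :: "nat set \<Rightarrow> bool" where
  "arf S \<longleftrightarrow> (\<forall>i j k. 1 \<le> k \<and> k \<le> j \<and> j \<le> i \<longrightarrow>
      int (rho S i) + int (rho S j) - int (rho S k) \<in> int ` S)"

definition apery :: "nat set \<Rightarrow> int \<Rightarrow> nat set" where
  "apery S x = {s \<in> S. int s - x \<notin> int ` S}"

definition dgap :: "nat set \<Rightarrow> nat \<Rightarrow> nat" where
  "dgap S i = rho S (i + 1) - rho S i"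

end

theory Submission
  imports Defs
begin

lemma ns_infinite: "numerical_semigroup S \<Longrightarrow> infinite S"
  unfolding numerical_semigroup_def
  by (metis Diff_infinite_finite finite_Diff2 infinite_UNIV_nat)

lemma arf_e:
  assumes "arf S" "c \<le> b" "b \<le> a" "infinite S"
  shows "enumerate S a + enumerate S b - enumerate S c \<in> S"
proof -
  have "int (rho S (a+1)) + int (rho S (b+1)) - int (rho S (c+1)) \<in> int ` S"
    using assms(1-3) unfolding arf_def by auto
  then obtain x where x: "x \<in> S"
    "int (enumerate S a) + int (enumerate S b) - int (enumerate S c) = int x"
    unfolding rho_def by auto
  have "enumerate S c \<le> enumerate S b" using assms by simp
  then have "x = enumerate S a + enumerate S b - enumerate S c" using x(2) by linarith
  then show ?thesis using x(1) by simp
qed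

lemma D_step:
  assumes "arf S" "infinite S"
  shows "enumerate S (Suc (Suc k)) - enumerate S (Suc k) \<le> enumerate S (Suc k) - enumerate S k"
proof -
  let ?e = "enumerate S"
  have xS: "?e (Suc k) + ?e (Suc k) - ?e k \<in> S" using arf_e[OF assms(1) _ _ assms(2)] by simp
  have lt: "?e k < ?e (Suc k)" using assms(2) by simp
  obtain m where m: "?e m = ?e (Suc k) + ?e (Suc k) - ?e k"
    using enumerate_Ex[OF assms(2) xS] by blast
  have "?e (Suc k) < ?e m" using m lt by linarith
  then have "Suc k < m" using assms(2) by simp
  then have "?e (Suc (Suc k)) \<le> ?e m" using assms(2) by simp
  then show ?thesis using m lt by linarith
qed

lemma D_anti:
  assumes "arf S" "infinite S" "k \<le> n"
  shows "enumerate S (Suc n) - enumerate S n \<le> enumerate S (Suc k) - enumerate S k"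
  using assms(3)
proof (induction n rule: dec_induct)
  case base then show ?case by simp
next
  case (step m)
  then show ?case using D_step[OF assms(1,2), of m] by linarith
qed

lemma gap_big:
  assumes "arf S" "infinite S" "a < b" "b \<le> Suc n"
  shows "enumerate S (Suc n) - enumerate S n \<le> enumerate S b - enumerate S a"
proof -
  let ?e = "enumerate S"
  obtain c where c: "b = Suc c" using assms(3) by (cases b) auto
  have "?e (Suc n) - ?e n \<le> ?e (Suc c) - ?e c" using D_anti[OF assms(1,2)] c assms(4) by simp
  moreover have "?e a \<le> ?e c" using assms c by simp
  moreover have "?e c < ?e (Suc c)" using assms(2) by simp
  ultimately have "?e (Suc n) - ?e n \<le> ?e (Suc c) - ?e a" by linarith
  then show ?thesis using c by simp
qed

lemma closure_d:
  assumes "arf S" "infinite S" "x \<in> S" "enumerate S (Suc n) \<le> x"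
  shows "x + (enumerate S (Suc (Suc n)) - enumerate S (Suc n)) \<in> S"
proof -
  let ?e = "enumerate S"
  obtain j where j: "?e j = x" using enumerate_Ex[OF assms(2,3)] by blast
  have "Suc n \<le> j" using j assms by (metis enumerate_mono_le_iff)
  have lt: "?e (Suc n) < ?e (Suc (Suc n))" using assms(2) by simp
  show ?thesis
  proof (cases "j = Suc n")
    case True
    then show ?thesis using j lt enumerate_in_set[OF assms(2)] by (metis le_add_diff_inverse less_imp_le)
  next
    case False
    then have "Suc (Suc n) \<le> j" using \<open>Suc n \<le> j\<close> by simp
    then have "?e j + ?e (Suc (Suc n)) - ?e (Suc n) \<in> S"
      using arf_e[OF assms(1) _ _ assms(2)] by simp
    then show ?thesis using j lt by simp
  qed
qed

lemma closure_dk: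
  assumes "arf S" "infinite S" "x \<in> S" "enumerate S (Suc n) \<le> x"
  shows "x + (enumerate S (Suc (Suc n)) - enumerate S (Suc n)) * k \<in> S"
proof -
  define D where "D = enumerate S (Suc (Suc n)) - enumerate S (Suc n)"
  have "x + D * k \<in> S"
  proof (induction k)
    case 0 then show ?case using assms by simp
  next
    case (Suc k)
    have "x + D * k + D \<in> S"
      using closure_d[OF assms(1,2) Suc] assms(4) unfolding D_def by simp
    moreover have "x + D * k + D = x + D * Suc k" by simp
    ultimately show ?case by simp
  qed
  then show ?thesis unfolding D_def .
qed

lemma ap_ge: "d \<le> x \<Longrightarrow> x \<in> apery S (int d) \<longleftrightarrow> x \<in> S \<and> x - d \<notin> S"
proof -
  assume h: "d \<le> x"
  have e: "int x - int d = int (x - d)" using h by simp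
  have "int (x - d) \<in> int ` S \<longleftrightarrow> x - d \<in> S" by (rule inj_image_mem_iff) simp
  moreover have "x \<in> apery S (int d) \<longleftrightarrow> x \<in> S \<and> int (x - d) \<notin> int ` S"
    unfolding apery_def by (simp only: mem_Collect_eq e)
  ultimately show ?thesis by simp
qed
lemma ap_lt: "x < d \<Longrightarrow> x \<in> S \<Longrightarrow> x \<in> apery S (int d)"
  unfolding apery_def by auto

theorem corollary3p4:
  fixes S :: "nat set" and i :: nat
  assumes "numerical_semigroup S" and "arf S"
    and "i \<ge> 2" and "dgap S i < dgap S (i - 1)"
  shows "card (apery S (int (dgap S i))) = i - 1 + dgap S i"
proof -
  have inf: "infinite S" using ns_infinite assms(1) by blast
  let ?e = "enumerate S"
  obtain n where n: "i = Suc (Suc n)" using assms(3) by (metis add_2_eq_Suc le_Suc_ex)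
  define p where "p = ?e (Suc n)"
  define d where "d = ?e (Suc (Suc n)) - ?e (Suc n)"
  have dg: "dgap S i = d" unfolding dgap_def rho_def d_def n by simp
  have dg2: "dgap S (i - 1) = ?e (Suc n) - ?e n" unfolding dgap_def rho_def n by simp
  have Dn: "d < ?e (Suc n) - ?e n" using assms(4) dg dg2 by simp
  have d0: "0 < d" unfolding d_def using inf by simp
  have pd: "d < p" unfolding p_def using Dn by linarith
  have pS: "p \<in> S" unfolding p_def using enumerate_in_set[OF inf] .
  have key: "x - d \<notin> S" if xSk: "x \<in> S" "x \<le> p" "d \<le> x" for x
  proof
    assume "x - d \<in> S"
    then have h: "x \<le> p" "d \<le> x" "x - d \<in> S" using xSk by auto
    obtain b where b: "?e b = x" using enumerate_Ex[OF inf xSk(1)] by blast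
    obtain a where a: "?e a = x - d" using enumerate_Ex[OF inf h(3)] by blast
    have "b \<le> Suc n" using b h(1) inf unfolding p_def by (metis enumerate_mono_le_iff)
    moreover have "a < b"
    proof -
      have "?e a < ?e b" using a b d0 h by simp
      then show ?thesis using inf by simp
    qed
    ultimately have "?e (Suc n) - ?e n \<le> ?e b - ?e a" using gap_big[OF assms(2) inf] by blast
    then show False using a b h Dn by linarith
  qed
  define L where "L = {x \<in> S. x < p}"
  define B where "B = {x \<in> S. p \<le> x \<and> x - d \<notin> S}"
  have ap: "apery S (int d) = L \<union> B"
  proof (intro equalityI subsetI)
    fix x assume x: "x \<in> apery S (int d)"
    then have xS: "x \<in> S" unfolding apery_def by simp
    show "x \<in> L \<union> B"
    proof (cases "x < p")
      case True then show ?thesis using xS L_def by simp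
    next
      case False
      then have "d \<le> x" using pd by simp
      then have "x - d \<notin> S" using x ap_ge by blast
      then show ?thesis using False xS B_def by simp
    qed
  next
    fix x assume x: "x \<in> L \<union> B"
    show "x \<in> apery S (int d)"
    proof (cases "x \<in> L")
      case True
      then have xS: "x \<in> S" "x < p" using L_def by auto
      show ?thesis
      proof (cases "x < d")
        case True
        then show ?thesis using xS ap_lt by blast
      next
        case False
        then have "d \<le> x" by simp
        moreover have "x - d \<notin> S" using key[OF xS(1)] xS \<open>d \<le> x\<close> by simp
        ultimately show ?thesis using xS ap_ge by blast
      qed
    next
      case False
      then have xB: "x \<in> S" "p \<le> x" "x - d \<notin> S" using x B_def by auto
      have "d \<le> x" using xB pd by simp
      then show ?thesis using xB ap_ge by blast
    qed
  qed
  have disj: "L \<inter> B = {}" unfolding L_def B_def by auto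
  have Leq: "L = ?e ` {..<Suc n}"
  proof (intro equalityI subsetI)
    fix x assume "x \<in> L"
    then have x: "x \<in> S" "x < p" using L_def by auto
    obtain b where b: "?e b = x" using enumerate_Ex[OF inf x(1)] by blast
    have "b < Suc n" using b x(2) inf unfolding p_def by (metis enumerate_mono_iff)
    then show "x \<in> ?e ` {..<Suc n}" using b by auto
  next
    fix x assume "x \<in> ?e ` {..<Suc n}"
    then obtain b where "b < Suc n" "x = ?e b" by auto
    then show "x \<in> L" unfolding L_def p_def using inf enumerate_in_set[OF inf] by auto
  qed
  have cL: "card L = Suc n"
  proof -
    have "inj_on ?e {..<Suc n}" using inj_enumerate[OF inf] by (meson inj_on_subset subset_UNIV)
    then show ?thesis using Leq card_image by fastforce
  qed
  define f where "f = (\<lambda>x. (x - p) mod d)"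
  have injf: "inj_on f B"
  proof (rule inj_onI)
    have gen: "x = y" if xy: "x \<in> B" "y \<in> B" "f x = f y" "x \<le> y" for x y
    proof (rule ccontr)
      assume "x \<noteq> y"
      then have lt: "x < y" using xy by simp
      have x: "x \<in> S" "p \<le> x" using xy B_def by auto
      have y: "y - d \<notin> S" "p \<le> y" using xy B_def by auto
      have "(y - p) mod d = (x - p) mod d" using xy f_def by simp
      then have "d dvd (y - p) - (x - p)" using mod_eq_dvd_iff_nat lt x y by simp
      moreover have "(y - p) - (x - p) = y - x" using x lt by simp
      ultimately have "d dvd y - x" by simp
      then obtain k where k: "y - x = d * k" by (elim dvdE)
      then have "k \<noteq> 0" using lt by (metis mult_0_right zero_less_diff less_irrefl)
      then obtain j where j: "k = Suc j" by (cases k) auto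
      have "x + d * j \<in> S" using closure_dk[OF assms(2) inf x(1), of n j] x(2) unfolding p_def d_def by (simp add: mult.commute)
      moreover have "y - d = x + d * j" using k j lt by simp
      ultimately show False using y by simp
    qed
    fix x y assume "x \<in> B" "y \<in> B" "f x = f y"
    then show "x = y" using gen[of x y] gen[of y x] by (metis nat_le_linear)
  qed
  have imf: "f ` B = {..<d}"
  proof (intro equalityI subsetI)
    fix r assume "r \<in> f ` B"
    then show "r \<in> {..<d}" using f_def d0 by auto
  next
    fix r assume r: "r \<in> {..<d}"
    define M where "M = {x \<in> S. p \<le> x \<and> (x - p) mod d = r}"
    obtain N where N: "\<forall>y\<ge>N. y \<in> S"
    proof -
      have "finite (UNIV - S)" using assms(1) numerical_semigroup_def by blast
      then obtain N where "\<forall>y \<in> UNIV - S. y < N" by (meson finite_nat_set_iff_bounded)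
      then show ?thesis using that by (meson DiffI UNIV_I not_le)
    qed
    have "p + r + d * N \<in> M"
    proof -
      have "N \<le> d * N" using d0 by simp
      then have "N \<le> p + r + d * N" by linarith
      then have "p + r + d * N \<in> S" using N by blast
      moreover have "(p + r + d * N - p) mod d = r" using r by simp
      ultimately show ?thesis unfolding M_def by simp
    qed
    then have sM: "(LEAST x. x \<in> M) \<in> M" by (rule LeastI)
    define s where "s = (LEAST x. x \<in> M)"
    have s: "s \<in> S" "p \<le> s" "(s - p) mod d = r" using sM s_def M_def by auto
    have "s - d \<notin> S"
    proof
      assume sd: "s - d \<in> S"
      show False
      proof (cases "p + d \<le> s")
        case True
        then have "(s - d - p) mod d = r" using s(3) le_mod_geq[of d "s - p"] d0
          by (simp add: diff_diff_left add.commute)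
        then have "s - d \<in> M" using sd True M_def by simp
        then have "s \<le> s - d" using Least_le s_def by metis
        then show False using d0 True pd by linarith
      next
        case False
        obtain j where j: "?e j = s" using enumerate_Ex[OF inf s(1)] by blast
        have "?e j < ?e (Suc (Suc n))" using False j d_def p_def inf by simp
        then have "j < Suc (Suc n)" using inf by (metis enumerate_mono_iff)
        moreover have "Suc n \<le> j" using j s(2) p_def inf by (metis enumerate_mono_le_iff)
        ultimately have "s = p" using j p_def by (metis le_antisym less_Suc_eq_le)
        then show False using key[OF pS] sd pd by simp
      qed
    qed
    then have "s \<in> B" using s B_def by simp
    then show "r \<in> f ` B" using s(3) f_def by auto
  qed
  have finB: "finite B" using injf imf by (metis finite_imageD finite_lessThan)
  have cB: "card B = d" using card_image[OF injf] imf by simp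
  have finL: "finite L" using Leq by simp
  have "card (apery S (int d)) = Suc n + d"
    using ap disj cL cB card_Un_disjoint[OF finL finB disj] by simp
  then show ?thesis using dg n by simp
qed

end
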